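(* For every $\tau$ with $0<\tau<1$, $$R(\tau)\ \le\ \overline{R}(\tau):=\min_{0\le\tau'\le\tau}\ \max\Big\{r\in[0,1]:\ h(v)\le 1-v\,h\Big(\min\Big(\tfrac{\tau-\tau'}{v(1-\tau')},\tfrac12\Big)\Big)\Big\},$$ where, for given $r$ and $\tau'$, $v=v(r,\tau')$ denotes the real number with $0\le v\le 1/2$ and $h(v)(1-\tau')=r$.
   Context: $h(x)=-x\log_2x-(1-x)\log_2(1-x)$ is the binary entropy function. Binary Z-channel with noiseless feedback: an input $0$ is always received as $0$; an input $1$ is received as $1$ or (an error) as $0$. A feedback encoding strategy of blocklength $n$ for a finite message set $\mathcal M$ consists of functions $c_i:\mathcal M\times\{0,1\}^{i-1}\to\{0,1\}$, $i=1,\dots,n$; when sending $m$ the $i$-th transmitted symbol is $c_i(m,y^{i-1})$, with $y^{i-1}$ the previously received symbols. Let $c(m,y^{n-1})=(c_1(m),\dots,c_n(m,y^{n-1}))$ and $\mathcal Y^n_t(m)=\{y^n\in\{0,1\}^n:y_i\le c_i(m,y^{i-1})\ \forall i,\ d_H(y^n,c(m,y^{n-1}))\le t\}$. The strategy is successful if the sets $\mathcal Y^n_t(m)$, $m\in\mathcal M$, are pairwise disjoint. $M(n,t)$ is the maximum $|\mathcal M|$ admitting a successful strategy of blocklength $n$ with at most $t$ errors, and $R(\tau):=\limsup_{n\to\infty}\frac1n\log_2M(n,\lceil\tau n\rceil)$. *)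

theory Defs
  imports "HOL-Analysis.Analysis"
begin

definition h :: "real \<Rightarrow> real" where
  "h x = (if x \<le> 0 \<or> x \<ge> 1 then 0 else - x * log 2 x - (1 - x) * log 2 (1 - x))"

text \<open>Messages are 0..K-1. A feedback strategy is c m ys, the symbol sent for message m
  after having received the prefix ys; the index i (0-based) is length ys.
  True = symbol 1, False = symbol 0.\<close>

definition Yset :: "(nat \<Rightarrow> bool list \<Rightarrow> bool) \<Rightarrow> nat \<Rightarrow> nat \<Rightarrow> nat \<Rightarrow> bool list set" where
  "Yset c n t m = {ys. length ys = n \<and>
      (\<forall>i<n. ys ! i \<longrightarrow> c m (take i ys)) \<and>
      card {i. i < n \<and> ys ! i \<noteq> c m (take i ys)} \<le> t}"

definition successful :: "nat \<Rightarrow> nat \<Rightarrow> nat \<Rightarrow> (nat \<Rightarrow> bool list \<Rightarrow> bool) \<Rightarrow> bool" where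
  "successful n t K c \<longleftrightarrow>
     (\<forall>m<K. \<forall>m'<K. m \<noteq> m' \<longrightarrow> Yset c n t m \<inter> Yset c n t m' = {})"

definition Mmax :: "nat \<Rightarrow> nat \<Rightarrow> nat" where
  "Mmax n t = Max {K. \<exists>c. successful n t K c}"

definition Rate :: "real \<Rightarrow> ereal" where
  "Rate \<tau> = limsup (\<lambda>n. ereal (log 2 (real (Mmax n (nat \<lceil>\<tau> * real n\<rceil>))) / real n))"

text \<open>Admissible rates r for given tau and tau': r in [0,1], v = v(r,tau') exists
  (0 <= v <= 1/2, h v * (1 - tau') = r; it is unique when tau' < 1) and the inequality holds.\<close>
definition admissible :: "real \<Rightarrow> real \<Rightarrow> real \<Rightarrow> bool" where
  "admissible \<tau> \<tau>' r \<longleftrightarrow> 0 \<le> r \<and> r \<le> 1 \<and>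
     (\<exists>v. 0 \<le> v \<and> v \<le> 1/2 \<and> h v * (1 - \<tau>') = r \<and>
          h v \<le> 1 - v * h (min ((\<tau> - \<tau>') / (v * (1 - \<tau>'))) (1/2)))"

definition Rbar :: "real \<Rightarrow> real" where
  "Rbar \<tau> = (INF \<tau>'\<in>{0..\<tau>}. Sup {r. admissible \<tau> \<tau>' r})"

end

theory Submission
  imports Defs "HOL-Real_Asymp.Real_Asymp"
begin

fun cok :: "(bool list \<Rightarrow> bool) \<Rightarrow> bool list \<Rightarrow> bool" where
  "cok f [] = True"
| "cok f (y # ys) = ((y \<longrightarrow> f []) \<and> cok (\<lambda>zs. f (y # zs)) ys)"

fun errs :: "(bool list \<Rightarrow> bool) \<Rightarrow> bool list \<Rightarrow> nat" where
  "errs f [] = 0"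
| "errs f (y # ys) = (if y = f [] then 0 else 1) + errs (\<lambda>zs. f (y # zs)) ys"

fun ones :: "(bool list \<Rightarrow> bool) \<Rightarrow> bool list \<Rightarrow> nat" where
  "ones f [] = 0"
| "ones f (y # ys) = (if f [] then 1 else 0) + ones (\<lambda>zs. f (y # zs)) ys"

definition wt :: "bool list \<Rightarrow> nat" where "wt ys = length (filter id ys)"

lemma cok_iff: "cok f ys \<longleftrightarrow> (\<forall>i<length ys. ys ! i \<longrightarrow> f (take i ys))"
proof (induction ys arbitrary: f)
  case Nil then show ?case by simp
next
  case (Cons y ys)
  show ?case
    by (auto simp: Cons.IH less_Suc_eq_0_disj)
qed

lemma set_Suc_split: "{i. i < Suc L \<and> P i} = {i. i = 0 \<and> P 0} \<union> Suc ` {i. i < L \<and> P (Suc i)}"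
  apply (rule set_eqI)
  subgoal for x by (cases x) auto
  done

lemma card_split: "finite B \<Longrightarrow> card ({i::nat. i = 0 \<and> Q} \<union> Suc ` B) = (if Q then 1 else 0) + card B"
proof (cases Q)
  case True
  assume "finite B"
  have "{i::nat. i = 0 \<and> Q} \<union> Suc ` B = insert 0 (Suc ` B)" using True by auto
  moreover have "card (insert 0 (Suc ` B)) = Suc (card (Suc ` B))"
    by (rule card_insert_disjoint) (use \<open>finite B\<close> in auto)
  ultimately show ?thesis using True by (simp add: card_image)
next
  case False
  then show ?thesis by (simp add: card_image)
qed

lemma card_split0: "finite B \<Longrightarrow> card ({i::nat. i = 0 \<and> y \<noteq> z} \<union> Suc ` B) = (if y = z then 0 else 1) + card B"
  using card_split[of B "y \<noteq> z"] by simp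

lemma errs_card: "errs f ys = card {i. i < length ys \<and> ys ! i \<noteq> f (take i ys)}"
proof (induction ys arbitrary: f)
  case Nil then show ?case by simp
next
  case (Cons y ys)
  have "{i. i < length (y # ys) \<and> (y # ys) ! i \<noteq> f (take i (y # ys))}
      = {i. i = 0 \<and> y \<noteq> f []} \<union> Suc ` {i. i < length ys \<and> ys ! i \<noteq> f (y # take i ys)}"
    by (subst length_Cons, subst set_Suc_split) simp
  moreover have "card ({i. i = 0 \<and> y \<noteq> f []} \<union> Suc ` {i. i < length ys \<and> ys ! i \<noteq> f (y # take i ys)})
     = (if y = f [] then 0 else 1) + card {i. i < length ys \<and> ys ! i \<noteq> f (y # take i ys)}"
    by (rule card_split0) simp
  ultimately show ?case using Cons.IH[of "\<lambda>zs. f (y # zs)"] by simp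
qed

lemma Yset_alt: "Yset c n t m = {ys. length ys = n \<and> cok (c m) ys \<and> errs (c m) ys \<le> t}"
  unfolding Yset_def by (auto simp: cok_iff errs_card)

lemma cok_append: "cok f (xs @ ys) = (cok f xs \<and> cok (\<lambda>z. f (xs @ z)) ys)"
  by (induction xs arbitrary: f) auto

lemma errs_append: "errs f (xs @ ys) = errs f xs + errs (\<lambda>z. f (xs @ z)) ys"
  by (induction xs arbitrary: f) auto

lemma cok_repl: "cok f (replicate n False)"
  by (induction n arbitrary: f) auto

lemma errs_le: "errs f xs \<le> length xs"
proof (induction xs arbitrary: f)
  case (Cons y xs)
  have "errs (\<lambda>zs. f (y # zs)) xs \<le> length xs" by (rule Cons.IH)
  moreover have "errs f (y#xs) \<le> 1 + errs (\<lambda>zs. f (y # zs)) xs" by simp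
  ultimately show ?case by simp
qed simp

lemma wt_le_ones: "cok f ys \<Longrightarrow> wt ys \<le> ones f ys"
proof (induction ys arbitrary: f)
  case (Cons y ys)
  have "wt ys \<le> ones (\<lambda>zs. f (y # zs)) ys" using Cons by simp
  then show ?case using Cons.prems by (auto simp: wt_def)
qed (simp add: wt_def)

definition S :: "(bool list \<Rightarrow> bool) \<Rightarrow> nat \<Rightarrow> nat \<Rightarrow> bool list set" where
  "S f L b = {ys. length ys = L \<and> cok f ys \<and> errs f ys \<le> b}"

lemma finite_len: "finite {ys :: bool list. length ys = L}"
  using finite_lists_length_eq[of "UNIV :: bool set" L] by simp

lemma card_len: "card {ys :: bool list. length ys = L} = 2 ^ L"
  using card_lists_length_eq[of "UNIV :: bool set" L] by simp

lemma finite_S: "finite (S f L b)"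
  by (rule finite_subset[OF _ finite_len[of L]]) (auto simp: S_def)

lemma S_nonempty: "\<exists>ys. length ys = L \<and> cok f ys \<and> errs f ys = 0"
proof (induction L arbitrary: f)
  case 0 then show ?case by auto
next
  case (Suc L)
  obtain ys where "length ys = L \<and> cok (\<lambda>zs. f (f [] # zs)) ys \<and> errs (\<lambda>zs. f (f [] # zs)) ys = 0"
    using Suc by blast
  then show ?case by (intro exI[of _ "f [] # ys"]) auto
qed

lemma S_Suc_T:
  assumes "f []"
  shows "S f (Suc L) (Suc b) = Cons True ` S (\<lambda>z. f (True # z)) L (Suc b) \<union> Cons False ` S (\<lambda>z. f (False # z)) L b"
  using assms by (auto simp: S_def length_Suc_conv image_iff split: if_splits)

lemma S_Suc_F:
  assumes "\<not> f []"
  shows "S f (Suc L) b = Cons False ` S (\<lambda>z. f (False # z)) L b"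
  using assms by (auto simp: S_def length_Suc_conv image_iff split: if_splits)

lemma count_lemma:
  assumes "\<forall>ys\<in>S f L b. W \<le> ones f ys"
  shows "(W choose b) \<le> card (S f L b)"
  using assms
proof (induction L arbitrary: f W b)
  case 0
  have "W = 0" using 0 S_nonempty[of 0 f] by (auto simp: S_def)
  moreover have "card (S f 0 b) = 1" 
  proof -
    have "S f 0 b = {[]}" by (auto simp: S_def)
    then show ?thesis by simp
  qed
  ultimately show ?case by (cases b) auto
next
  case (Suc L)
  have ne: "S f (Suc L) b \<noteq> {}" using S_nonempty[of "Suc L" f] by (auto simp: S_def)
  hence c1: "1 \<le> card (S f (Suc L) b)" using finite_S[of f "Suc L" b]
    by (simp add: Suc_leI card_gt_0_iff)
  show ?case
  proof (cases "f []")
    case False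
    have "card (S f (Suc L) b) = card (S (\<lambda>z. f (False # z)) L b)"
      by (simp add: S_Suc_F[of f, OF False] card_image)
    moreover have "(W choose b) \<le> card (S (\<lambda>z. f (False # z)) L b)"
    proof (rule Suc.IH, rule ballI)
      fix ys assume "ys \<in> S (\<lambda>z. f (False # z)) L b"
      hence "False # ys \<in> S f (Suc L) b" using False by (simp add: S_Suc_F[of f])
      hence "W \<le> ones f (False # ys)" using Suc.prems by blast
      thus "W \<le> ones (\<lambda>z. f (False # z)) ys" using False by simp
    qed
    ultimately show ?thesis by simp
  next
    case True
    show ?thesis
    proof (cases "W = 0 \<or> b = 0")
      case True
      then have "(W choose b) \<le> 1" by (cases "W = 0"; cases b) auto
      then show ?thesis using c1 by linarith
    next
      case False
      then obtain W' b' where Wb: "W = Suc W'" "b = Suc b'" by (metis not0_implies_Suc)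
      let ?A = "S (\<lambda>z. f (True # z)) L (Suc b')" and ?B = "S (\<lambda>z. f (False # z)) L b'"
      have eq: "S f (Suc L) b = Cons True ` ?A \<union> Cons False ` ?B" using S_Suc_T[of f, OF True] Wb by simp
      have "card (S f (Suc L) b) = card (Cons True ` ?A) + card (Cons False ` ?B)"
        unfolding eq by (rule card_Un_disjoint) (auto simp: finite_S)
      also have "\<dots> = card ?A + card ?B" by (simp add: card_image)
      finally have cs: "card (S f (Suc L) b) = card ?A + card ?B" .
      have iA: "(W' choose Suc b') \<le> card ?A"
      proof (rule Suc.IH, rule ballI)
        fix ys assume "ys \<in> ?A"
        hence "True # ys \<in> S f (Suc L) b" using eq by blast
        hence "W \<le> ones f (True # ys)" using Suc.prems by blast
        thus "W' \<le> ones (\<lambda>z. f (True # z)) ys" using True Wb by simp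
      qed
      have iB: "(W' choose b') \<le> card ?B"
      proof (rule Suc.IH, rule ballI)
        fix ys assume "ys \<in> ?B"
        hence "False # ys \<in> S f (Suc L) b" using eq by blast
        hence "W \<le> ones f (False # ys)" using Suc.prems by blast
        thus "W' \<le> ones (\<lambda>z. f (False # z)) ys" using True Wb by simp
      qed
      show ?thesis using cs iA iB Wb by simp
    qed
  qed
qed

lemma h_pos_formula: "0 < x \<Longrightarrow> x < 1 \<Longrightarrow> h x = - x * log 2 x - (1 - x) * log 2 (1 - x)"
  by (simp add: h_def)

lemma h_nonneg: "0 \<le> h x"
proof (cases "0 < x \<and> x < 1")
  case True
  have "log 2 x < 0" "log 2 (1 - x) < 0" using True by auto
  then have "0 \<le> - x * log 2 x" "0 \<le> - (1 - x) * log 2 (1 - x)" using True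
    by (simp_all add: mult_nonneg_nonpos mult_nonpos_nonpos)
  moreover have "h x = (- x * log 2 x) + (- (1 - x) * log 2 (1 - x))" using True by (simp add: h_def algebra_simps)
  ultimately show ?thesis by linarith
next
  case False then show ?thesis by (auto simp: h_def)
qed

lemma h_half: "h (1/2) = 1"
proof -
  have l0: "log 2 (inverse 2::real) = - log 2 2" using log_inverse[of 2 2] by simp
  have l: "log 2 (1/2::real) = -1" using l0 by (simp add: inverse_eq_divide)
  have e: "(1::real) - 1/2 = 1/2" by simp
  have "h (1/2) = - (1/2) * log 2 (1/2) - (1 - 1/2) * log 2 (1 - 1/2)" by (rule h_pos_formula) auto
  also have "\<dots> = 1" unfolding e l by simp
  finally show ?thesis .
qed

lemma h_0: "h 0 = 0" and h_1: "h 1 = 0" by (auto simp: h_def)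

definition nwt :: "bool list \<Rightarrow> nat" where "nwt ys = length (filter Not ys)"

lemma wt_nwt: "wt ys + nwt ys = length ys"
  by (induction ys) (auto simp: wt_def nwt_def)

lemma len_Suc_split: "{ys :: bool list. length ys = Suc N} = Cons True ` {ys. length ys = N} \<union> Cons False ` {ys. length ys = N}"
  by (auto simp: length_Suc_conv image_iff)

lemma sum_rho: "(\<Sum>ys\<in>{ys :: bool list. length ys = N}. (v::real) ^ wt ys * (1 - v) ^ nwt ys) = 1"
proof (induction N)
  case 0
  have "{ys :: bool list. length ys = 0} = {[]}" by auto
  then show ?case by (simp add: wt_def nwt_def)
next
  case (Suc N)
  define X where "X = {ys :: bool list. length ys = N}"
  define g where "g ys = v ^ wt ys * (1 - v) ^ nwt ys" for ys
  have gT: "g (True # ys) = v * g ys" for ys by (simp add: g_def wt_def nwt_def)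
  have gF: "g (False # ys) = (1 - v) * g ys" for ys by (simp add: g_def wt_def nwt_def)
  have inj: "inj_on (Cons b) X" for b :: bool by (simp add: inj_on_def)
  have fX: "finite X" unfolding X_def by (rule finite_len)
  have "sum g {ys :: bool list. length ys = Suc N} = sum g (Cons True ` X) + sum g (Cons False ` X)"
    unfolding len_Suc_split X_def[symmetric] by (rule sum.union_disjoint) (use fX in auto)
  also have "sum g (Cons True ` X) = sum (\<lambda>ys. g (True # ys)) X"
    using sum.reindex[OF inj[of True], of g] by (simp add: comp_def)
  also have "sum g (Cons False ` X) = sum (\<lambda>ys. g (False # ys)) X"
    using sum.reindex[OF inj[of False], of g] by (simp add: comp_def)
  also have "sum (\<lambda>ys. g (True # ys)) X + sum (\<lambda>ys. g (False # ys)) X = v * sum g X + (1 - v) * sum g X"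
    unfolding gT gF by (simp only: sum_distrib_left)
  also have "\<dots> = 1" using Suc.IH unfolding g_def X_def by simp
  finally show ?case unfolding g_def .
qed

lemma rho_lower:
  fixes v :: real
  assumes v: "0 < v" "v \<le> 1/2" and ab: "a + b = N" and a: "real a \<le> v * N"
  shows "2 powr (- (N * h v)) \<le> v ^ a * (1 - v) ^ b"
proof -
  have v1: "v < 1" using v by simp
  have pos: "0 < v ^ a * (1 - v) ^ b" using v v1 by simp
  have L: "log 2 (v ^ a * (1 - v) ^ b) = a * log 2 v + b * log 2 (1 - v)"
    using v v1 by (simp add: log_mult log_nat_power)
  have lv: "log 2 v \<le> log 2 (1 - v)" using v by simp
  have "- (N * h v) = N * v * log 2 v + N * (1 - v) * log 2 (1 - v)"
    by (subst h_pos_formula[OF v(1) v1]) (simp add: algebra_simps)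
  also have "\<dots> \<le> a * log 2 v + b * log 2 (1 - v)"
  proof -
    have bN: "real b = N - real a" using ab by simp
    have "a * log 2 v + b * log 2 (1 - v) - (N * v * log 2 v + N * (1 - v) * log 2 (1 - v))
        = (N * v - a) * (log 2 (1 - v) - log 2 v)"
      unfolding bN by (simp add: algebra_simps)
    also have "\<dots> \<ge> 0" using a lv by (intro mult_nonneg_nonneg) (auto simp: mult.commute)
    finally show ?thesis by simp
  qed
  finally have "- (N * h v) \<le> log 2 (v ^ a * (1 - v) ^ b)" using L by simp
  then have "2 powr (- (N * h v)) \<le> 2 powr (log 2 (v ^ a * (1 - v) ^ b))" by simp
  also have "\<dots> = v ^ a * (1 - v) ^ b" using pos by simp
  finally show ?thesis .
qed

lemma light_bound:
  fixes v :: real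
  assumes v: "0 < v" "v \<le> 1/2"
    and A: "A \<subseteq> {ys. length ys = N \<and> real (wt ys) \<le> v * N}"
  shows "real (card A) \<le> 2 powr (N * h v)"
proof -
  define x where "x = N * h v"
  define g where "g ys = v ^ wt ys * (1 - v) ^ nwt ys" for ys
  have gnn: "0 \<le> g ys" for ys using v by (simp add: g_def)
  have "real (card A) * 2 powr (- x) = (\<Sum>ys\<in>A. 2 powr (- x))" by simp
  also have "\<dots> \<le> sum g A"
  proof (rule sum_mono)
    fix ys assume "ys \<in> A"
    then have "length ys = N" "real (wt ys) \<le> v * N" using A by auto
    moreover have "wt ys + nwt ys = N" using wt_nwt[of ys] \<open>length ys = N\<close> by simp
    ultimately show "2 powr (- x) \<le> g ys" unfolding x_def g_def
      by (intro rho_lower[OF v]) auto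
  qed
  also have "\<dots> \<le> sum g {ys. length ys = N}"
  proof (rule sum_mono2[OF finite_len])
    show "A \<subseteq> {ys. length ys = N}" using A by auto
    show "\<And>b. b \<in> {ys. length ys = N} - A \<Longrightarrow> 0 \<le> g b" by (rule gnn)
  qed
  also have "\<dots> = 1" unfolding g_def by (rule sum_rho)
  finally have c: "real (card A) * 2 powr (- x) \<le> 1" .
  have e1: "2 powr (- x) * 2 powr x = 1" by (subst powr_add[symmetric]) simp
  have "real (card A) = real (card A) * 2 powr (- x) * 2 powr x"
    by (simp only: mult.assoc e1 mult_1_right)
  also have "\<dots> \<le> 1 * 2 powr x" by (rule mult_right_mono[OF c]) simp
  finally show ?thesis unfolding x_def by simp
qed

lemma binom_step: "j < W \<Longrightarrow> real (W choose Suc j) * (Suc j) = real (W choose j) * (W - j)"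
proof -
  assume "j < W"
  have "(W - j) * (W choose j) = W * ((W - 1) choose j)" by (rule binomial_absorb_comp)
  moreover have "Suc j * (W choose Suc j) = W * ((W - 1) choose (Suc j - 1))"
    by (rule times_binomial_minus1_eq) simp
  ultimately have "(W choose Suc j) * Suc j = (W choose j) * (W - j)" by (simp add: mult.commute)
  then have "real ((W choose Suc j) * Suc j) = real ((W choose j) * (W - j))" by simp
  then show ?thesis using \<open>j < W\<close> by (simp add: of_nat_diff algebra_simps)
qed

lemma binom_lower:
  assumes W: "0 < W" and k: "k \<le> W"
  shows "2 powr (W * h (k / W)) \<le> (W + 1) * real (W choose k)"
proof (cases "k = 0 \<or> k = W")
  case True
  then have "h (k / W) = 0" using W by (auto simp: h_def)
  moreover have "1 \<le> real (W choose k)" using True by auto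
  ultimately show ?thesis using mult_mono[of 1 "real W + 1" 1 "real (W choose k)"] by simp
next
  case False
  then have k0: "0 < k" "k < W" using k by auto
  define p where "p = real k / W"
  have p: "0 < p" "p < 1" using k0 W by (auto simp: p_def)
  define a where "a j = real (W choose j) * p ^ j * (1 - p) ^ (W - j)" for j
  have a_nn: "0 \<le> a j" for j using p by (simp add: a_def)
  have sum1: "(\<Sum>j\<le>W. a j) = 1"
    using binomial_ring[of p "1 - p" W] by (simp add: a_def)
  have rel: "a (Suc j) * (real (Suc j) * (real W - k)) = a j * ((real W - j) * k)" if "j < W" for j
  proof -
    have e: "W - j = Suc (W - Suc j)" using that by simp
    define C1 where "C1 = real (W choose Suc j)"
    define C0 where "C0 = real (W choose j)"
    define P where "P = p ^ j"
    define Q where "Q = (1 - p) ^ (W - Suc j)"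
    have b: "C1 * real (Suc j) = C0 * (real W - j)" unfolding C1_def C0_def using binom_step[OF that] that
      by (simp add: of_nat_diff)
    have pk: "p * (real W - k) = (1 - p) * k" using W by (simp add: p_def field_simps)
    have A1: "a (Suc j) = C1 * (p * P) * Q" unfolding a_def C1_def P_def Q_def by simp
    have A0: "a j = C0 * P * ((1 - p) * Q)" unfolding a_def C0_def P_def Q_def e by simp
    have "a (Suc j) * (real (Suc j) * (real W - k)) = (C1 * real (Suc j)) * P * Q * (p * (real W - k))"
      unfolding A1 by (simp only: mult_ac)
    also have "\<dots> = C0 * (real W - j) * P * Q * ((1 - p) * k)" unfolding b pk ..
    also have "\<dots> = a j * ((real W - j) * k)" unfolding A0 by (simp only: mult_ac)
    finally show ?thesis .
  qed
  have up: "a j \<le> a (Suc j)" if "j < k" for j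
  proof -
    have jW: "j < W" using that k0 by simp
    have "real (Suc j) * (real W - k) \<le> (real W - j) * real k"
    proof -
      have "real (Suc j) \<le> k" using that by simp
      then have "real (Suc j) * real W \<le> real k * real W" by (simp add: mult_right_mono)
      then show ?thesis by (simp add: algebra_simps)
    qed
    then have "a j * (real (Suc j) * (real W - k)) \<le> a j * ((real W - j) * k)" by (rule mult_left_mono) (rule a_nn)
    also have "\<dots> = a (Suc j) * (real (Suc j) * (real W - k))" using rel[OF jW] by simp
    finally have "a j * (real (Suc j) * (real W - k)) \<le> a (Suc j) * (real (Suc j) * (real W - k))" .
    moreover have "0 < real (Suc j) * (real W - k)" using k0 by simp
    ultimately show ?thesis by (rule mult_right_le_imp_le)
  qed
  have down: "a (Suc j) \<le> a j" if "k \<le> j" "j < W" for j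
  proof -
    have "(real W - j) * real k \<le> real (Suc j) * (real W - k)"
    proof -
      have "real W * k \<le> real W * j" using that by (simp add: mult_left_mono)
      moreover have "real k \<le> real W" using k by simp
      ultimately show ?thesis by (simp add: algebra_simps)
    qed
    then have "a j * ((real W - j) * real k) \<le> a j * (real (Suc j) * (real W - k))" by (rule mult_left_mono) (rule a_nn)
    then have "a (Suc j) * (real (Suc j) * (real W - k)) \<le> a j * (real (Suc j) * (real W - k))"
      using rel[OF that(2)] by simp
    moreover have "0 < real (Suc j) * (real W - k)" using k0 by simp
    ultimately show ?thesis by (rule mult_right_le_imp_le)
  qed
  have amax: "a j \<le> a k" if "j \<le> W" for j
  proof (cases "j \<le> k")
    case True
    show ?thesis using True
    proof (induction j rule: inc_induct)
      case base then show ?case by simp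
    next
      case (step n) then show ?case using up[of n] by simp
    qed
  next
    case False
    then have "k \<le> j" by simp
    then show ?thesis using that
    proof (induction j rule: dec_induct)
      case base then show ?case by simp
    next
      case (step n) then show ?case using down[of n] by simp
    qed
  qed
  have "1 \<le> (\<Sum>j\<le>W. a k)" unfolding sum1[symmetric] by (rule sum_mono) (simp add: amax)
  then have s: "1 \<le> (W + 1) * a k" by simp
  have pk: "p ^ k * (1 - p) ^ (W - k) = 2 powr (- (W * h p))"
  proof -
    have pos: "0 < p ^ k * (1 - p) ^ (W - k)" using p by simp
    have "log 2 (p ^ k * (1 - p) ^ (W - k)) = k * log 2 p + (W - k) * log 2 (1 - p)"
      using p k0 by (simp add: log_mult log_nat_power of_nat_diff)
    also have "\<dots> = - (W * h p)"
    proof -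
      have "real k = W * p" "real (W - k) = W * (1 - p)" using W k by (auto simp: p_def field_simps of_nat_diff)
      then show ?thesis using p by (simp add: h_def algebra_simps)
    qed
    finally show ?thesis using pos by (metis powr_log_cancel zero_less_numeral less_numeral_extra(4) one_less_numeral_iff semiring_norm(76))
  qed
  have "a k = real (W choose k) * 2 powr (- (W * h p))" unfolding a_def using pk by (simp add: mult.assoc)
  with s have "1 \<le> (W + 1) * real (W choose k) * 2 powr (- (W * h p))" by (simp add: mult.assoc)
  then have "2 powr (W * h p) \<le> (W + 1) * real (W choose k) * 2 powr (- (W * h p)) * 2 powr (W * h p)"
    by (simp add: mult_right_mono)
  also have "\<dots> = (W + 1) * real (W choose k)" by (simp add: mult.assoc flip: powr_add)
  finally show ?thesis by (simp add: p_def add.commute)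
qed

lemma S_mono: "k \<le> e \<Longrightarrow> S f L k \<subseteq> S f L e"
  by (auto simp: S_def)

lemma main_count:
  fixes v :: real
  assumes succ: "successful n t K c" and n1t: "n1 \<le> t" and n1n: "n1 \<le> n"
    and ke: "k \<le> t - n1" and kW: "k \<le> W" and v: "0 < v" "v \<le> 1/2"
    and Wv: "real W < v * real (n - n1) + 1"
  shows "real K \<le> 2 powr (real (n - n1) * h v) + 2 ^ (n - n1) / real (W choose k)"
proof -
  define N where "N = n - n1"
  define e where "e = t - n1"
  define c' where "c' m ys = c m (replicate n1 False @ ys)" for m ys
  define Y where "Y m = S (c' m) N e" for m
  have key: "replicate n1 False @ ys \<in> Yset c n t m" if "ys \<in> Y m" for ys m
  proof -
    have ys: "length ys = N" "cok (c' m) ys" "errs (c' m) ys \<le> e" using that by (auto simp: Y_def S_def)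
    have eq: "(\<lambda>z. c m (replicate n1 False @ z)) = c' m" by (auto simp: c'_def)
    have "errs (c m) (replicate n1 False) \<le> n1" using errs_le[of "c m" "replicate n1 False"] by simp
    then show ?thesis using ys n1t n1n
      by (auto simp: Yset_alt cok_append errs_append eq cok_repl N_def e_def)
  qed
  have disj: "Y m \<inter> Y m' = {}" if "m < K" "m' < K" "m \<noteq> m'" for m m'
  proof -
    have "Yset c n t m \<inter> Yset c n t m' = {}" using succ that by (auto simp: successful_def)
    then show ?thesis using key by blast
  qed
  have finY: "finite (Y m)" for m by (simp add: Y_def finite_S)
  have Ylen: "Y m \<subseteq> {ys. length ys = N}" for m by (auto simp: Y_def S_def)
  define H where "H = {m. m < K \<and> (\<forall>ys\<in>Y m. W \<le> ones (c' m) ys)}"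
  define Lt where "Lt = {m. m < K \<and> \<not> (\<forall>ys\<in>Y m. W \<le> ones (c' m) ys)}"
  have KHL: "K = card H + card Lt"
  proof -
    have "{..<K} = H \<union> Lt" by (auto simp: H_def Lt_def)
    moreover have "H \<inter> Lt = {}" by (auto simp: H_def Lt_def)
    moreover have "finite H" "finite Lt" by (auto simp: H_def Lt_def)
    ultimately show ?thesis by (metis card_Un_disjoint card_lessThan)
  qed
  define g where "g m = (SOME ys. ys \<in> Y m \<and> ones (c' m) ys < W)" for m
  have g: "g m \<in> Y m \<and> ones (c' m) (g m) < W" if "m \<in> Lt" for m
  proof -
    have "\<exists>ys. ys \<in> Y m \<and> ones (c' m) ys < W" using that by (auto simp: Lt_def not_le)
    then show ?thesis unfolding g_def by (rule someI_ex)
  qed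
  have injg: "inj_on g Lt"
  proof (rule inj_onI)
    fix m m' assume m: "m \<in> Lt" "m' \<in> Lt" "g m = g m'"
    show "m = m'"
    proof (rule ccontr)
      assume "m \<noteq> m'"
      then have "Y m \<inter> Y m' = {}" using m by (intro disj) (auto simp: Lt_def)
      then show False using g[OF m(1)] g[OF m(2)] m(3) by auto
    qed
  qed
  have gsub: "g ` Lt \<subseteq> {ys. length ys = N \<and> real (wt ys) \<le> v * N}"
  proof
    fix ys assume "ys \<in> g ` Lt"
    then obtain m where m: "m \<in> Lt" "ys = g m" by auto
    have "ys \<in> Y m" "ones (c' m) ys < W" using g[OF m(1)] m(2) by auto
    then have "length ys = N" "cok (c' m) ys" "ones (c' m) ys < W" by (auto simp: Y_def S_def)
    then have "wt ys < W" using wt_le_ones[of "c' m" ys] by simp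
    then have "real (wt ys) + 1 \<le> real W" by linarith
    then have "real (wt ys) \<le> v * N" using Wv unfolding N_def by linarith
    then show "ys \<in> {ys. length ys = N \<and> real (wt ys) \<le> v * N}" using \<open>length ys = N\<close> by simp
  qed
  have L: "real (card Lt) \<le> 2 powr (N * h v)"
    using light_bound[OF v gsub] card_image[OF injg] by simp
  have cH: "(W choose k) \<le> card (Y m)" if "m \<in> H" for m
  proof -
    have sub: "S (c' m) N k \<subseteq> Y m" unfolding Y_def e_def using ke by (rule S_mono)
    have "(W choose k) \<le> card (S (c' m) N k)"
      by (rule count_lemma) (use that sub in \<open>auto simp: H_def\<close>)
    also have "\<dots> \<le> card (Y m)" using sub finY by (rule card_mono[rotated])
    finally show ?thesis .
  qed
  have "card H * (W choose k) = (\<Sum>m\<in>H. (W choose k))" by simp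
  also have "\<dots> \<le> (\<Sum>m\<in>H. card (Y m))" by (rule sum_mono) (rule cH)
  also have "\<dots> = card (\<Union> (Y ` H))"
  proof (rule card_UN_disjoint[symmetric])
    show "finite H" by (simp add: H_def)
    show "\<forall>i\<in>H. finite (Y i)" by (simp add: finY)
    show "\<forall>i\<in>H. \<forall>j\<in>H. i \<noteq> j \<longrightarrow> Y i \<inter> Y j = {}" using disj by (auto simp: H_def)
  qed
  also have "\<dots> \<le> card {ys :: bool list. length ys = N}"
    by (rule card_mono[OF finite_len]) (use Ylen in blast)
  also have "\<dots> = 2 ^ N" by (rule card_len)
  finally have "card H * (W choose k) \<le> 2 ^ N" .
  then have "real (card H) * real (W choose k) \<le> 2 ^ N" by (metis of_nat_le_iff of_nat_mult of_nat_numeral of_nat_power)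
  moreover have "0 < real (W choose k)" using kW by simp
  ultimately have Hb: "real (card H) \<le> 2 ^ N / real (W choose k)" by (simp add: field_simps)
  show ?thesis using KHL L Hb unfolding N_def by simp
qed

lemma H_lim0: "((\<lambda>x::real. - x * log 2 x - (1 - x) * log 2 (1 - x)) \<longlongrightarrow> 0) (at_right 0)"
  unfolding log_def by real_asymp

lemma isCont_h_pos: assumes "0 < x" "x < 1" shows "isCont h x"
proof -
  have ev: "eventually (\<lambda>y. y \<in> {0<..<1}) (nhds x)"
    using assms by (intro eventually_nhds_in_open) auto
  have "eventually (\<lambda>y. h y = - y * log 2 y - (1 - y) * log 2 (1 - y)) (nhds x)"
    using ev by eventually_elim (simp add: h_def)
  then have "isCont h x \<longleftrightarrow> isCont (\<lambda>y. - y * log 2 y - (1 - y) * log 2 (1 - y)) x"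
    by (rule isCont_cong)
  moreover have "isCont (\<lambda>y. - y * log 2 y - (1 - y) * log 2 (1 - y)) x"
    using assms by (intro continuous_intros) auto
  ultimately show ?thesis by simp
qed

lemma isCont_h_0: "isCont h 0"
proof -
  have r: "(h \<longlongrightarrow> 0) (at_right 0)"
  proof (rule Lim_transform_eventually[OF H_lim0])
    have "eventually (\<lambda>x::real. x \<in> {0<..<1}) (at_right 0)"
      by (rule eventually_at_right_real) simp
    then show "eventually (\<lambda>x. - x * log 2 x - (1 - x) * log 2 (1 - x) = h x) (at_right 0)"
      by eventually_elim (simp add: h_def)
  qed
  have l: "(h \<longlongrightarrow> 0) (at_left 0)"
  proof (rule Lim_transform_eventually[OF tendsto_const])
    have "eventually (\<lambda>x::real. x \<in> {-1<..<0}) (at_left 0)"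
      by (rule eventually_at_left_real) simp
    then show "eventually (\<lambda>x::real. 0 = h x) (at_left 0)"
      by eventually_elim (simp add: h_def)
  qed
  have "(h \<longlongrightarrow> 0) (at 0)" using r l by (simp add: filterlim_at_split)
  then show ?thesis unfolding isCont_def by (simp add: h_def)
qed

lemma isCont_h: "0 \<le> x \<Longrightarrow> x < 1 \<Longrightarrow> isCont h x"
  using isCont_h_0 isCont_h_pos by (cases "x = 0") auto

lemma lim_ratio1:
  fixes a b d :: real assumes b: "0 < b"
  shows "(\<lambda>n. a * real n / (b * real n + d)) \<longlonglongrightarrow> a / b"
proof -
  have "(\<lambda>n. a / (b + d / real n)) \<longlonglongrightarrow> a / (b + 0)"
    using b by (intro tendsto_divide tendsto_const tendsto_add lim_const_over_n) auto
  moreover have "eventually (\<lambda>n. a / (b + d / real n) = a * real n / (b * real n + d)) sequentially"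
    using eventually_gt_at_top[of "0::nat"]
  proof eventually_elim
    case (elim n)
    then have "b + d / real n = (b * real n + d) / real n" by (simp add: field_simps)
    then show ?case using elim by simp
  qed
  ultimately show ?thesis by (simp add: tendsto_cong)
qed

lemma lim_ratio2:
  fixes a b d :: real assumes b: "0 < b"
  shows "(\<lambda>n. (a * real n + d) / (b * real n)) \<longlonglongrightarrow> a / b"
proof -
  have "(\<lambda>n. (a + d / real n) / b) \<longlonglongrightarrow> (a + 0) / b"
    using b by (intro tendsto_divide tendsto_const tendsto_add lim_const_over_n) auto
  moreover have "eventually (\<lambda>n. (a + d / real n) / b = (a * real n + d) / (b * real n)) sequentially"
    using eventually_gt_at_top[of "0::nat"]
  proof eventually_elim
    case (elim n)
    then show ?case by (simp add: field_simps)
  qed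
  ultimately show ?thesis by (simp add: tendsto_cong)
qed

lemma Mmax_bound:
  assumes "\<And>K c. successful n t K c \<Longrightarrow> real K \<le> B"
  shows "1 \<le> Mmax n t" "real (Mmax n t) \<le> B"
proof -
  let ?X = "{K. \<exists>c. successful n t K c}"
  have sub: "?X \<subseteq> {..nat \<lceil>B\<rceil>}"
  proof
    fix K assume "K \<in> ?X"
    then obtain c where "successful n t K c" by auto
    then have "real K \<le> B" by (rule assms)
    then show "K \<in> {..nat \<lceil>B\<rceil>}" by simp linarith
  qed
  have fin: "finite ?X" by (rule finite_subset[OF sub]) simp
  have one: "1 \<in> ?X" by (auto simp: successful_def)
  have "Mmax n t \<in> ?X" unfolding Mmax_def using fin one by (intro Max_in) auto
  then show "real (Mmax n t) \<le> B" using assms by auto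
  show "1 \<le> Mmax n t" unfolding Mmax_def using fin one by (rule Max_ge)
qed

lemma log_lim: "(\<lambda>n. log 2 (real n + 3) / real n) \<longlonglongrightarrow> 0"
  unfolding log_def by real_asymp

definition tt :: "real \<Rightarrow> nat \<Rightarrow> nat" where "tt a n = nat \<lceil>a * real n\<rceil>"
definition nn1 :: "real \<Rightarrow> nat \<Rightarrow> nat" where "nn1 a n = nat \<lfloor>a * real n\<rfloor>"
definition NN :: "real \<Rightarrow> nat \<Rightarrow> nat" where "NN a n = n - nn1 a n"
definition WW :: "real \<Rightarrow> real \<Rightarrow> nat \<Rightarrow> nat" where "WW a v n = nat \<lceil>v * real (NN a n)\<rceil>"
definition kk :: "real \<Rightarrow> real \<Rightarrow> real \<Rightarrow> nat \<Rightarrow> nat" where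
  "kk b a v n = min (tt b n - nn1 a n) (WW a v n div 2)"

lemma basic:
  assumes \<tau>: "0 < \<tau>" "\<tau> < 1" and \<tau>': "0 \<le> \<tau>'" "\<tau>' \<le> \<tau>" and v: "0 < v" "v \<le> 1/2" and n: "1 \<le> n"
  shows "nn1 \<tau>' n \<le> tt \<tau> n" "nn1 \<tau>' n \<le> n"
    "(\<tau> - \<tau>') * n \<le> real (tt \<tau> n - nn1 \<tau>' n)" "real (tt \<tau> n - nn1 \<tau>' n) \<le> (\<tau> - \<tau>') * n + 2"
    "(1 - \<tau>') * n \<le> real (NN \<tau>' n)" "real (NN \<tau>' n) \<le> (1 - \<tau>') * n + 1"
    "v * real (NN \<tau>' n) \<le> real (WW \<tau>' v n)" "real (WW \<tau>' v n) < v * real (NN \<tau>' n) + 1"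
    "0 < WW \<tau>' v n"
    "v * (1 - \<tau>') * n \<le> real (WW \<tau>' v n)" "real (WW \<tau>' v n) \<le> v * (1 - \<tau>') * n + 2"
    "kk \<tau> \<tau>' v n \<le> tt \<tau> n - nn1 \<tau>' n" "kk \<tau> \<tau>' v n \<le> WW \<tau>' v n"
    "real (WW \<tau>' v n) \<le> real n + 1"
proof -
  have rn: "1 \<le> real n" using n by simp
  have t1: "\<tau> * n \<le> real (tt \<tau> n)" "real (tt \<tau> n) < \<tau> * n + 1"
    unfolding tt_def using \<tau> by (auto simp: of_nat_nat) linarith+
  have t2: "real (nn1 \<tau>' n) \<le> \<tau>' * n" "\<tau>' * n - 1 < real (nn1 \<tau>' n)"
    unfolding nn1_def using \<tau>' by (auto simp: of_nat_nat)
  have tn: "\<tau>' * n \<le> \<tau> * n" using \<tau>' rn by (simp add: mult_right_mono)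
  have tn2: "\<tau>' * n \<le> n" using \<tau>' \<tau> rn by (simp add: mult_left_le_one_le)
  show a1: "nn1 \<tau>' n \<le> tt \<tau> n" using t1 t2 tn by linarith
  show a2: "nn1 \<tau>' n \<le> n" using t2 tn2 by linarith
  have e: "real (tt \<tau> n - nn1 \<tau>' n) = real (tt \<tau> n) - real (nn1 \<tau>' n)" using a1 by (simp add: of_nat_diff)
  show "(\<tau> - \<tau>') * n \<le> real (tt \<tau> n - nn1 \<tau>' n)" unfolding e using t1 t2 by (simp add: algebra_simps)
  show "real (tt \<tau> n - nn1 \<tau>' n) \<le> (\<tau> - \<tau>') * n + 2" unfolding e using t1 t2 by (simp add: algebra_simps)
  have eN: "real (NN \<tau>' n) = real n - real (nn1 \<tau>' n)" unfolding NN_def using a2 by (simp add: of_nat_diff)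
  show N1: "(1 - \<tau>') * n \<le> real (NN \<tau>' n)" unfolding eN using t2 by (simp add: algebra_simps)
  show N2: "real (NN \<tau>' n) \<le> (1 - \<tau>') * n + 1" unfolding eN using t2 by (simp add: algebra_simps)
  have Npos: "0 < (1 - \<tau>') * n" using \<tau> \<tau>' rn by simp
  have vN: "0 \<le> v * real (NN \<tau>' n)" using v by simp
  show W1: "v * real (NN \<tau>' n) \<le> real (WW \<tau>' v n)" unfolding WW_def using vN by (simp add: of_nat_nat)
  show W2: "real (WW \<tau>' v n) < v * real (NN \<tau>' n) + 1" unfolding WW_def using vN by (simp add: of_nat_nat) linarith
  have "0 < v * real (NN \<tau>' n)" using v N1 Npos by simp
  then show "0 < WW \<tau>' v n" using W1 by linarith
  have "v * ((1 - \<tau>') * n) \<le> v * real (NN \<tau>' n)" using N1 v by (simp add: mult_left_mono)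
  then show "v * (1 - \<tau>') * n \<le> real (WW \<tau>' v n)" using W1 by (simp add: mult.assoc)
  have "v * real (NN \<tau>' n) \<le> v * ((1 - \<tau>') * n + 1)" using N2 v by (simp add: mult_left_mono)
  then show "real (WW \<tau>' v n) \<le> v * (1 - \<tau>') * n + 2" using W2 v by (simp add: algebra_simps)
  have "v * real (NN \<tau>' n) \<le> real (NN \<tau>' n)" using v by (simp add: mult_left_le_one_le)
  moreover have "real (NN \<tau>' n) \<le> real n" unfolding eN by simp
  ultimately show "real (WW \<tau>' v n) \<le> real n + 1" using W2 by linarith
  show "kk \<tau> \<tau>' v n \<le> tt \<tau> n - nn1 \<tau>' n" "kk \<tau> \<tau>' v n \<le> WW \<tau>' v n" by (auto simp: kk_def)
qed

definition MM :: "real \<Rightarrow> real \<Rightarrow> real \<Rightarrow> nat \<Rightarrow> real" where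
  "MM b a v n = max (h v) (1 - v * h (real (kk b a v n) / real (WW a v n)))"

lemma per_n:
  assumes \<tau>: "0 < \<tau>" "\<tau> < 1" and \<tau>': "0 \<le> \<tau>'" "\<tau>' \<le> \<tau>" and v: "0 < v" "v \<le> 1/2" and n: "1 \<le> n"
  shows "log 2 (real (Mmax n (tt \<tau> n))) / real n
         \<le> log 2 (real n + 3) / real n + (1 - \<tau>' + 1 / real n) * MM \<tau> \<tau>' v n"
proof -
  note B = basic[OF \<tau> \<tau>' v n]
  define N where "N = NN \<tau>' n"
  define W where "W = WW \<tau>' v n"
  define k where "k = kk \<tau> \<tau>' v n"
  define M where "M = MM \<tau> \<tau>' v n"
  define hk where "hk = h (real k / real W)"
  have Wpos: "0 < W" using B unfolding W_def by simp
  have hk0: "0 \<le> hk" unfolding hk_def by (rule h_nonneg)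
  have M0: "0 \<le> M" unfolding M_def MM_def using h_nonneg[of v] by simp
  have Mv: "h v \<le> M" and Mk: "1 - v * hk \<le> M" unfolding M_def MM_def hk_def k_def W_def by auto
  have NM1: "real N * h v \<le> real N * M" using Mv by (simp add: mult_left_mono)
  have NM2: "real N - real W * hk \<le> real N * M"
  proof -
    have "v * real N * hk \<le> real W * hk" using B hk0 unfolding N_def W_def by (simp add: mult_right_mono)
    then have "real N - real W * hk \<le> real N * (1 - v * hk)" by (simp add: algebra_simps)
    also have "\<dots> \<le> real N * M" using Mk by (simp add: mult_left_mono)
    finally show ?thesis .
  qed
  have Kb: "real K \<le> (real n + 3) * 2 powr (real N * M)" if succ: "successful n (tt \<tau> n) K c" for K c
  proof -
    have "real K \<le> 2 powr (real (n - nn1 \<tau>' n) * h v) + 2 ^ (n - nn1 \<tau>' n) / real (W choose k)"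
      by (rule main_count[OF succ]) (use B v in \<open>auto simp: W_def k_def NN_def\<close>)
    then have K1: "real K \<le> 2 powr (real N * h v) + 2 powr (real N) / real (W choose k)"
      by (simp add: N_def NN_def powr_realpow)
    have bl: "2 powr (real W * hk) \<le> (real W + 1) * real (W choose k)"
      unfolding hk_def using binom_lower[OF Wpos, of k] B by (simp add: W_def k_def)
    have Cpos: "0 < real (W choose k)" using B by (simp add: W_def k_def)
    have w1: "real W + 1 \<noteq> 0" by simp
    have "2 powr (real N) / real (W choose k) = ((real W + 1) * 2 powr (real N)) / ((real W + 1) * real (W choose k))"
      using w1 by (rule mult_divide_mult_cancel_left[symmetric])
    also have "\<dots> \<le> ((real W + 1) * 2 powr (real N)) / 2 powr (real W * hk)"
      by (rule divide_left_mono[OF bl]) (use Cpos in auto)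
    also have "\<dots> = (real W + 1) * 2 powr (real N - real W * hk)"
      by (simp add: powr_diff)
    also have "\<dots> \<le> (real W + 1) * 2 powr (real N * M)"
      using NM2 by (intro mult_left_mono) auto
    finally have K2: "2 powr (real N) / real (W choose k) \<le> (real W + 1) * 2 powr (real N * M)" .
    have K3: "2 powr (real N * h v) \<le> 2 powr (real N * M)" using NM1 by simp
    have "real K \<le> 2 powr (real N * M) + (real W + 1) * 2 powr (real N * M)" using K1 K2 K3 by linarith
    also have "\<dots> = (real W + 2) * 2 powr (real N * M)" by (simp add: algebra_simps)
    also have "\<dots> \<le> (real n + 3) * 2 powr (real N * M)"
      using B by (intro mult_right_mono) (auto simp: W_def)
    finally show ?thesis .
  qed
  have Mm: "1 \<le> Mmax n (tt \<tau> n)" "real (Mmax n (tt \<tau> n)) \<le> (real n + 3) * 2 powr (real N * M)"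
    using Mmax_bound[of n "tt \<tau> n", OF Kb] by auto
  have "log 2 (real (Mmax n (tt \<tau> n))) \<le> log 2 ((real n + 3) * 2 powr (real N * M))"
    using Mm by (subst log_le_cancel_iff) auto
  also have "\<dots> = log 2 (real n + 3) + real N * M" by (simp add: log_mult)
  also have "\<dots> \<le> log 2 (real n + 3) + ((1 - \<tau>') * n + 1) * M"
    using B M0 by (intro add_left_mono mult_right_mono) (auto simp: N_def)
  finally have "log 2 (real (Mmax n (tt \<tau> n))) / real n \<le> (log 2 (real n + 3) + ((1 - \<tau>') * n + 1) * M) / real n"
    using n by (intro divide_right_mono) auto
  also have "\<dots> = log 2 (real n + 3) / real n + (1 - \<tau>' + 1 / real n) * M"
    using n by (simp add: field_simps)
  finally show ?thesis unfolding M_def .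
qed

lemma min_div: "0 < (w::real) \<Longrightarrow> real (min x y) / w = min (real x / w) (real y / w)"
  by (auto simp: min_def divide_le_cancel)

lemma kW_lim:
  assumes \<tau>: "0 < \<tau>" "\<tau> < 1" and \<tau>': "0 \<le> \<tau>'" "\<tau>' \<le> \<tau>" and v: "0 < v" "v \<le> 1/2"
  shows "(\<lambda>n. real (kk \<tau> \<tau>' v n) / real (WW \<tau>' v n)) \<longlonglongrightarrow> min ((\<tau> - \<tau>') / (v * (1 - \<tau>'))) (1/2)"
proof -
  define a where "a = \<tau> - \<tau>'"
  define b where "b = v * (1 - \<tau>')"
  have a0: "0 \<le> a" using \<tau>' by (simp add: a_def)
  have b0: "0 < b" using \<tau> \<tau>' v by (simp add: b_def)
  define e where "e n = real (tt \<tau> n - nn1 \<tau>' n)" for n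
  define Wr where "Wr n = real (WW \<tau>' v n)" for n
  have ev1: "eventually (\<lambda>n. 1 \<le> n) sequentially" by (rule eventually_ge_at_top)
  have eW: "(\<lambda>n. e n / Wr n) \<longlonglongrightarrow> a / b"
  proof (rule tendsto_sandwich[OF _ _ lim_ratio1[OF b0, of a 2] lim_ratio2[OF b0, of a 2]])
    show "eventually (\<lambda>n. a * real n / (b * real n + 2) \<le> e n / Wr n) sequentially"
      using ev1
    proof eventually_elim
      case (elim n)
      note B = basic[OF \<tau> \<tau>' v elim]
      have Wp: "0 < Wr n" using B by (simp add: Wr_def)
      have an: "0 \<le> a * real n" using a0 by simp
      have "a * real n / (b * real n + 2) \<le> a * real n / Wr n"
        using B Wp an by (intro divide_left_mono) (auto simp: Wr_def b_def)
      also have "\<dots> \<le> e n / Wr n" using B Wp by (intro divide_right_mono) (auto simp: e_def a_def)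
      finally show ?case .
    qed
    show "eventually (\<lambda>n. e n / Wr n \<le> (a * real n + 2) / (b * real n)) sequentially"
      using ev1
    proof eventually_elim
      case (elim n)
      note B = basic[OF \<tau> \<tau>' v elim]
      have bn: "0 < b * real n" using b0 elim by simp
      have e0: "0 \<le> e n" by (simp add: e_def)
      have "e n / Wr n \<le> (a * real n + 2) / Wr n"
        using B by (intro divide_right_mono) (auto simp: e_def a_def Wr_def)
      also have "\<dots> \<le> (a * real n + 2) / (b * real n)"
        using B bn e0 a0 by (intro divide_left_mono) (auto simp: Wr_def b_def)
      finally show ?case .
    qed
  qed
  have dW: "(\<lambda>n. real (WW \<tau>' v n div 2) / Wr n) \<longlonglongrightarrow> 1/2"
  proof (rule tendsto_sandwich[OF _ _ _ tendsto_const])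
    show "(\<lambda>n. 1/2 - (1 / (2 * b)) / real n) \<longlonglongrightarrow> 1/2"
      using tendsto_diff[OF tendsto_const lim_const_over_n, of "1/2::real" "1 / (2 * b)"] by simp
    show "eventually (\<lambda>n. 1/2 - (1 / (2 * b)) / real n \<le> real (WW \<tau>' v n div 2) / Wr n) sequentially"
      using ev1
    proof eventually_elim
      case (elim n)
      note B = basic[OF \<tau> \<tau>' v elim]
      define w where "w = WW \<tau>' v n"
      have Wp: "0 < real w" using B by (simp add: w_def)
      have bn: "b * real n \<le> real w" using B by (simp add: w_def b_def)
      have bnp: "0 < b * real n" using b0 elim by simp
      have d: "real w - 1 \<le> 2 * real (w div 2)"
      proof -
        have "w \<le> 2 * (w div 2) + 1" by linarith
        then show ?thesis by linarith
      qed
      have "1 / (2 * b) / real n = 1 / (2 * (b * real n))" by simp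
      also have "\<dots> \<ge> 1 / (2 * real w)" using bn bnp by (intro divide_left_mono mult_left_mono) auto
      finally have i: "1 / (2 * real w) \<le> 1 / (2 * b) / real n" .
      have "1/2 - 1 / (2 * real w) = (real w - 1) / (2 * real w)" using Wp by (simp add: field_simps)
      also have "\<dots> \<le> (2 * real (w div 2)) / (2 * real w)" using d Wp by (intro divide_right_mono) auto
      also have "\<dots> = real (w div 2) / real w" by simp
      finally show ?case using i unfolding Wr_def w_def by linarith
    qed
    show "eventually (\<lambda>n. real (WW \<tau>' v n div 2) / Wr n \<le> 1/2) sequentially"
      using ev1
    proof eventually_elim
      case (elim n)
      note B = basic[OF \<tau> \<tau>' v elim]
      define w where "w = WW \<tau>' v n"
      have Wp: "0 < real w" using B by (simp add: w_def)
      have "2 * real (w div 2) \<le> real w" by linarith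
      then show ?case unfolding Wr_def w_def[symmetric] using Wp by (simp add: field_simps)
    qed
  qed
  have "(\<lambda>n. min (e n / Wr n) (real (WW \<tau>' v n div 2) / Wr n)) \<longlonglongrightarrow> min (a / b) (1/2)"
    by (rule tendsto_min[OF eW dW])
  moreover have "eventually (\<lambda>n. min (e n / Wr n) (real (WW \<tau>' v n div 2) / Wr n)
      = real (kk \<tau> \<tau>' v n) / real (WW \<tau>' v n)) sequentially"
    using ev1
  proof eventually_elim
    case (elim n)
    note B = basic[OF \<tau> \<tau>' v elim]
    have Wp: "0 < Wr n" using B by (simp add: Wr_def)
    show ?case unfolding kk_def e_def using min_div[OF Wp] by (simp add: Wr_def)
  qed
  ultimately show ?thesis unfolding a_def b_def by (rule Lim_transform_eventually)
qed

lemma rate_bound: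
  assumes \<tau>: "0 < \<tau>" "\<tau> < 1" and \<tau>': "0 \<le> \<tau>'" "\<tau>' \<le> \<tau>" and v: "0 < v" "v \<le> 1/2"
  shows "Rate \<tau> \<le> ereal ((1 - \<tau>') * max (h v) (1 - v * h (min ((\<tau> - \<tau>') / (v * (1 - \<tau>'))) (1/2))))"
proof -
  define q where "q = min ((\<tau> - \<tau>') / (v * (1 - \<tau>'))) (1/2)"
  define u where "u n = log 2 (real n + 3) / real n + (1 - \<tau>' + 1 / real n) * MM \<tau> \<tau>' v n" for n
  have q: "0 \<le> q" "q < 1" using \<tau> \<tau>' v by (auto simp: q_def)
  have hq: "(\<lambda>n. h (real (kk \<tau> \<tau>' v n) / real (WW \<tau>' v n))) \<longlonglongrightarrow> h q"
    by (rule isCont_tendsto_compose[OF isCont_h[OF q] kW_lim[OF \<tau> \<tau>' v, folded q_def]])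
  have lim: "u \<longlonglongrightarrow> 0 + (1 - \<tau>' + 0) * max (h v) (1 - v * h q)"
    unfolding u_def MM_def
    by (intro tendsto_add tendsto_mult tendsto_max tendsto_diff tendsto_const log_lim lim_const_over_n hq)
  have "Rate \<tau> = limsup (\<lambda>n. ereal (log 2 (real (Mmax n (tt \<tau> n))) / real n))"
    by (simp add: Rate_def tt_def)
  also have "\<dots> \<le> limsup (\<lambda>n. ereal (u n))"
  proof (rule Limsup_mono)
    show "eventually (\<lambda>n. ereal (log 2 (real (Mmax n (tt \<tau> n))) / real n) \<le> ereal (u n)) sequentially"
      using eventually_ge_at_top[of 1]
    proof eventually_elim
      case (elim n) then show ?case using per_n[OF \<tau> \<tau>' v elim] by (simp add: u_def)
    qed
  qed
  also have "limsup (\<lambda>n. ereal (u n)) = ereal ((1 - \<tau>') * max (h v) (1 - v * h q))"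
    using lim_imp_Limsup[OF trivial_limit_sequentially tendsto_ereal[OF lim]] by simp
  finally show ?thesis unfolding q_def .
qed

lemma rstar_bound:
  assumes \<tau>: "0 < \<tau>" "\<tau> < 1" and \<tau>': "0 \<le> \<tau>'" "\<tau>' \<le> \<tau>"
  shows "Rate \<tau> \<le> ereal (Sup {r. admissible \<tau> \<tau>' r})"
proof -
  define A where "A = {r. admissible \<tau> \<tau>' r}"
  define s where "s = Sup A"
  have bdd: "bdd_above A" unfolding A_def admissible_def by (rule bdd_aboveI[of _ 1]) auto
  have A0: "0 \<in> A" unfolding A_def admissible_def by (intro CollectI conjI exI[of _ 0]) (auto simp: h_0)
  have s0: "0 \<le> s" unfolding s_def using cSup_upper[OF A0 bdd] .
  have t1: "0 < 1 - \<tau>'" using \<tau> \<tau>' by simp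
  have R1: "Rate \<tau> \<le> ereal (1 - \<tau>')"
  proof -
    have "Rate \<tau> \<le> ereal ((1 - \<tau>') * max (h (1/2)) (1 - 1/2 * h (min ((\<tau> - \<tau>') / (1/2 * (1 - \<tau>'))) (1/2))))"
      by (rule rate_bound[OF \<tau> \<tau>']) auto
    also have "max (h (1/2)) (1 - 1/2 * h (min ((\<tau> - \<tau>') / (1/2 * (1 - \<tau>'))) (1/2))) = 1"
      using h_nonneg[of "min ((\<tau> - \<tau>') / (1/2 * (1 - \<tau>'))) (1/2)"] by (simp add: h_half)
    finally show ?thesis by simp
  qed
  show ?thesis
  proof (cases "1 - \<tau>' \<le> s")
    case True
    then show ?thesis using R1 unfolding s_def A_def by (meson ereal_less_eq(3) order_trans)
  next
    case False
    then have slt: "s < 1 - \<tau>'" by simp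
    have key: "Rate \<tau> \<le> ereal w" if w: "s < w" "w < 1 - \<tau>'" for w
    proof -
      define y where "y = w / (1 - \<tau>')"
      have y: "0 < y" "y < 1" using w s0 t1 by (auto simp: y_def field_simps)
      have cont: "continuous_on {0..1/2} h"
        by (rule continuous_at_imp_continuous_on) (auto intro!: isCont_h)
      obtain v where v: "0 \<le> v" "v \<le> 1/2" "h v = y"
        using IVT'[of h 0 y "1/2", OF _ _ _ cont] y by (auto simp: h_0 h_half)
      have v0: "0 < v" using v y h_0 by (cases "v = 0") auto
      have hv: "h v * (1 - \<tau>') = w" using v t1 by (simp add: y_def)
      have "w \<notin> A"
      proof
        assume "w \<in> A"
        then have "w \<le> s" unfolding s_def using bdd by (rule cSup_upper)
        then show False using w by simp
      qed
      then have "\<not> (h v \<le> 1 - v * h (min ((\<tau> - \<tau>') / (v * (1 - \<tau>'))) (1/2)))"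
        using v hv w s0 t1 \<tau>' unfolding A_def admissible_def by auto
      then have mx: "max (h v) (1 - v * h (min ((\<tau> - \<tau>') / (v * (1 - \<tau>'))) (1/2))) = h v" by simp
      have "Rate \<tau> \<le> ereal ((1 - \<tau>') * max (h v) (1 - v * h (min ((\<tau> - \<tau>') / (v * (1 - \<tau>'))) (1/2))))"
        by (rule rate_bound[OF \<tau> \<tau>' v0 v(2)])
      then show ?thesis unfolding mx using hv by (simp add: mult.commute)
    qed
    show ?thesis
    proof (cases "Rate \<tau>")
      case (real x)
      have "x \<le> s"
      proof (rule dense_ge_bounded[OF slt])
        fix w assume "s < w" "w < 1 - \<tau>'"
        then show "x \<le> w" using key[of w] real by simp
      qed
      then show ?thesis using real unfolding s_def A_def by simp
    next
      case PInf then show ?thesis using R1 by simp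
    next
      case MInf then show ?thesis by simp
    qed
  qed
qed

theorem theorem3:
  fixes \<tau> :: real
  assumes "0 < \<tau>" and "\<tau> < 1"
  shows "Rate \<tau> \<le> ereal (Rbar \<tau>)"
proof -
  have b: "Rate \<tau> \<le> ereal (Sup {r. admissible \<tau> \<tau>' r})" if "\<tau>' \<in> {0..\<tau>}" for \<tau>'
    using rstar_bound[OF assms] that by auto
  show ?thesis
  proof (cases "Rate \<tau>")
    case (real x)
    have "x \<le> Rbar \<tau>" unfolding Rbar_def
    proof (rule cINF_greatest)
      show "{0..\<tau>} \<noteq> {}" using assms by simp
      fix \<tau>' assume "\<tau>' \<in> {0..\<tau>}"
      then show "x \<le> Sup {r. admissible \<tau> \<tau>' r}" using b real by fastforce
    qed
    then show ?thesis using real by simp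
  next
    case PInf
    then show ?thesis using b[of 0] assms by simp
  next
    case MInf then show ?thesis by simp
  qed
qed

end
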